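(* For all integers $k\geq 1$ and $n\geq 0$, \[ \sum_{i=0}^{n} f_{i}^{(k)} = \sum_{i=0}^{\lfloor n/(k+1) \rfloor} (-1)^{i} \binom{n-ik}{i}2^{n-i(k+1)}. \]
   Context: For an integer $k\geq 1$, the $k$-bonacci numbers $f_n^{(k)}$ ($n\in\mathbb{Z}$) are defined by $f_n^{(k)}=0$ for $n<0$, $f_0^{(k)}=1$, and $f_n^{(k)}=\sum_{i=1}^{k} f_{n-i}^{(k)}$ for $n\geq 1$. Here $\lfloor x\rfloor$ denotes the floor function. *)

theory Defs
  imports Main
begin

function kbonacci :: "nat \<Rightarrow> int \<Rightarrow> int" where
  "kbonacci k n = (if n < 0 then 0 else if n = 0 then 1
                   else (\<Sum>i\<in>{1..k}. kbonacci k (n - int i)))"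
  by auto
termination
  by (relation "measure (\<lambda>(k, n). nat (n + 1))") auto

end

theory Submission
  imports Defs
begin

declare kbonacci.simps[simp del]

lemma kb_neg: "n < 0 \<Longrightarrow> kbonacci k n = 0"
  by (subst kbonacci.simps) simp

lemma kb_zero: "kbonacci k 0 = 1"
  by (subst kbonacci.simps) simp

lemma kb_pos: "n > 0 \<Longrightarrow> kbonacci k n = (\<Sum>i\<in>{1..k}. kbonacci k (n - int i))"
  by (subst kbonacci.simps) simp

definition S :: "nat \<Rightarrow> int \<Rightarrow> int" where
  "S k n = (\<Sum>j\<in>{0..n}. kbonacci k j)"

lemma S_neg: "n < 0 \<Longrightarrow> S k n = 0"
  unfolding S_def by simp

lemma S_step: "S k m = S k (m - 1) + kbonacci k m"
proof (cases "m < 0")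
  case True then show ?thesis by (simp add: S_neg kb_neg)
next
  case False
  then have "{0..m} = insert m {0..m-1}" by auto
  then show ?thesis unfolding S_def by simp
qed

lemma S_window: "(\<Sum>i\<in>{1..k}. kbonacci k' (n - int i)) = S k' (n - 1) - S k' (n - 1 - int k)"
proof (induction k)
  case 0 then show ?case by simp
next
  case (Suc k)
  have "(\<Sum>i\<in>{1..Suc k}. kbonacci k' (n - int i)) =
        (\<Sum>i\<in>{1..k}. kbonacci k' (n - int i)) + kbonacci k' (n - int (Suc k))"
    by simp
  also have "\<dots> = S k' (n - 1) - S k' (n - 1 - int k) + kbonacci k' (n - 1 - int k)"
    using Suc by (simp add: algebra_simps)
  also have "S k' (n - 1 - int k) = S k' (n - 1 - int (Suc k)) + kbonacci k' (n - 1 - int k)"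
    using S_step[of k' "n - 1 - int k"] by simp
  finally show ?case by simp
qed

lemma S_rec: "n \<ge> 1 \<Longrightarrow> S k n = 2 * S k (n - 1) - S k (n - 1 - int k)"
  using S_step[of k n] kb_pos[where n=n and k=k] S_window[where k=k and k'=k and n=n] by simp

definition T :: "nat \<Rightarrow> int \<Rightarrow> nat \<Rightarrow> int" where
  "T k n i = (if int (i * (k + 1)) \<le> n then
      (-1) ^ i * int ((nat n - i * k) choose i) * 2 ^ (nat n - i * (k + 1)) else 0)"

definition G :: "nat \<Rightarrow> int \<Rightarrow> int" where
  "G k n = (\<Sum>i<nat n + 1. T k n i)"

lemma G_big: "N \<ge> nat n + 1 \<Longrightarrow> (\<Sum>i<N. T k n i) = G k n"
  unfolding G_def
proof (rule sum.mono_neutral_left[symmetric])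
  show "\<forall>i\<in>{..<N} - {..<nat n + 1}. T k n i = 0"
  proof
    fix i assume "i \<in> {..<N} - {..<nat n + 1}"
    then have "i > nat n" by auto
    then have "n < int i" by linarith
    moreover have "int i \<le> int (i * (k + 1))" by simp
    ultimately have "int (i * (k + 1)) > n" by linarith
    then show "T k n i = 0" unfolding T_def by simp
  qed
qed auto

lemma G_neg: "n < 0 \<Longrightarrow> G k n = 0"
  unfolding G_def T_def by simp

lemma T0: assumes "n \<ge> 1" shows "T k n 0 = 2 * T k (n - 1) 0"
proof -
  define m where "m = nat n - 1"
  have m1: "nat n = Suc m" "nat (n - 1) = m" using assms unfolding m_def by auto
  have "0 \<le> n" "0 \<le> n - 1" using assms by auto
  then show ?thesis unfolding T_def m1 by simp
qed

lemma TSuc: assumes "n \<ge> 1" shows "T k n (Suc i) = 2 * T k (n - 1) (Suc i) - T k (n - 1 - int k) i"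
proof (cases "int (Suc i * (k + 1)) \<le> n")
  case False
  then have "\<not> int (Suc i * (k + 1)) \<le> n - 1" by simp
  moreover have "\<not> int (i * (k + 1)) \<le> n - 1 - int k" using False by (simp add: algebra_simps)
  ultimately show ?thesis using False unfolding T_def by simp
next
  case True
  define N where "N = nat n"
  define a where "a = N - Suc i * (k + 1)"
  have nN: "n = int N" unfolding N_def using assms by simp
  have h: "Suc i * (k + 1) \<le> N" using True unfolding nN by (simp only: of_nat_le_iff)
  have an: "N = a + Suc i * (k + 1)" using h unfolding a_def by simp
  have n1: "n - 1 = int (N - 1)" using nN assms by simp
  have n3: "n - 1 - int k = int (a + i * (k + 1))" using nN an by (simp add: algebra_simps)
  have e1: "N - Suc i * k = Suc (a + i)" using an by (simp add: algebra_simps)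
  have e2: "N - Suc i * (k + 1) = a" using an by simp
  have l: "T k n (Suc i) = (-1) ^ Suc i * int (Suc (a + i) choose Suc i) * 2 ^ a"
    unfolding T_def nN nat_int using h e1 e2 by (simp only: of_nat_le_iff if_True)
  have f3: "(a + i * (k + 1)) - i * k = a + i" "(a + i * (k + 1)) - i * (k + 1) = a"
    by (simp_all add: algebra_simps)
  have r3: "T k (n - 1 - int k) i = (-1) ^ i * int ((a + i) choose i) * 2 ^ a"
    unfolding T_def n3 nat_int f3 by simp
  have r2: "2 * T k (n - 1) (Suc i) = (-1) ^ Suc i * int ((a + i) choose Suc i) * 2 ^ a"
  proof (cases a)
    case 0
    then have "\<not> Suc i * (k + 1) \<le> N - 1" using an by simp
    then have "\<not> int (Suc i * (k + 1)) \<le> int (N - 1)" by (simp only: of_nat_le_iff not_False_eq_True)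
    then show ?thesis unfolding T_def n1 nat_int using 0 by simp
  next
    case (Suc b)
    have g: "Suc i * (k + 1) \<le> N - 1" using an Suc by simp
    have f: "(N - 1) - Suc i * k = a + i" "(N - 1) - Suc i * (k + 1) = b"
      using an Suc by (simp_all add: algebra_simps)
    have gi: "int (Suc i * (k + 1)) \<le> int (N - 1)" using g by (simp only: of_nat_le_iff)
    show ?thesis unfolding T_def n1 nat_int if_P[OF gi] f Suc by simp
  qed
  show ?thesis unfolding l r2 r3 by (simp add: algebra_simps)
qed

lemma T_neg: "m < 0 \<Longrightarrow> T k m i = 0"
proof -
  assume "m < 0"
  moreover have "0 \<le> int (i * (k + 1))" by simp
  ultimately have "\<not> int (i * (k + 1)) \<le> m" by linarith
  then show ?thesis unfolding T_def by simp
qed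

lemma G_rec: assumes "n \<ge> 1" shows "G k n = 2 * G k (n - 1) - G k (n - 1 - int k)"
proof -
  have "G k n = T k n 0 + (\<Sum>i<nat n. T k n (Suc i))"
    unfolding G_def by (simp only: Suc_eq_plus1[symmetric] sum.lessThan_Suc_shift)
  also have "\<dots> = 2 * T k (n - 1) 0 + 2 * (\<Sum>i<nat n. T k (n - 1) (Suc i))
      - (\<Sum>i<nat n. T k (n - 1 - int k) i)"
    using assms by (simp add: T0 TSuc sum_subtractf sum_distrib_left)
  also have "2 * T k (n - 1) 0 + 2 * (\<Sum>i<nat n. T k (n - 1) (Suc i)) = 2 * (\<Sum>i<Suc (nat n). T k (n - 1) i)"
    by (subst sum.lessThan_Suc_shift) simp
  also have "(\<Sum>i<Suc (nat n). T k (n - 1) i) = G k (n - 1)"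
    by (rule G_big) simp
  also have "(\<Sum>i<nat n. T k (n - 1 - int k) i) = G k (n - 1 - int k)"
  proof (cases "n - 1 - int k < 0")
    case True
    then show ?thesis by (simp add: G_neg T_neg)
  next
    case False
    then show ?thesis using assms by (intro G_big) simp
  qed
  finally show ?thesis .
qed

lemma S_eq_G: "S k n = G k n"
proof (induction "nat n" arbitrary: n rule: less_induct)
  case less
  show ?case
  proof (cases "n < 1")
    case True
    show ?thesis
    proof (cases "n = 0")
      case True then show ?thesis
        by (simp add: S_def G_def T_def kb_zero)
    next
      case False then show ?thesis using \<open>n < 1\<close> by (simp add: S_neg G_neg)
    qed
  next
    case False
    then have n1: "n \<ge> 1" by simp
    have "S k (n - 1) = G k (n - 1)" using n1 by (intro less) simp
    moreover have "S k (n - 1 - int k) = G k (n - 1 - int k)"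
    proof (cases "n - 1 - int k < 0")
      case True then show ?thesis by (simp add: S_neg G_neg)
    next
      case False then show ?thesis using n1 by (intro less) simp
    qed
    ultimately show ?thesis using S_rec[OF n1] G_rec[OF n1] by simp
  qed
qed

theorem theorem2p2:
  fixes k n :: nat
  assumes "k \<ge> 1"
  shows "(\<Sum>i=0..n. kbonacci k (int i)) =
         (\<Sum>i=0..n div (k + 1). (-1) ^ i * int ((n - i * k) choose i) * 2 ^ (n - i * (k + 1)))"
proof -
  have L: "(\<Sum>i=0..n. kbonacci k (int i)) = S k (int n)"
    unfolding S_def
    by (rule sum.reindex_bij_witness[of _ nat int]) auto
  have "G k (int n) = (\<Sum>i=0..n div (k + 1). T k (int n) i)"
    unfolding G_def
  proof (rule sum.mono_neutral_right)
    show "{0..n div (k + 1)} \<subseteq> {..<nat (int n) + 1}"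
      by auto (meson div_le_dividend le_imp_less_Suc order_trans)
    show "\<forall>i\<in>{..<nat (int n) + 1} - {0..n div (k + 1)}. T k (int n) i = 0"
    proof
      fix i assume "i \<in> {..<nat (int n) + 1} - {0..n div (k + 1)}"
      then have "n div (k + 1) < i" by auto
      then have "n < i * (k + 1)" using div_less_iff_less_mult[of "k + 1" n i] by simp
      then have "\<not> int (i * (k + 1)) \<le> int n" by (simp only: of_nat_le_iff not_le)
      then show "T k (int n) i = 0" unfolding T_def by simp
    qed
  qed auto
  also have "\<dots> = (\<Sum>i=0..n div (k + 1). (-1) ^ i * int ((n - i * k) choose i) * 2 ^ (n - i * (k + 1)))"
  proof (rule sum.cong)
    fix i assume "i \<in> {0..n div (k + 1)}"
    then have "i * (k + 1) \<le> n" by (auto simp: less_eq_div_iff_mult_less_eq)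
    then have "int (i * (k + 1)) \<le> int n" by (simp only: of_nat_le_iff)
    then show "T k (int n) i = (-1) ^ i * int ((n - i * k) choose i) * 2 ^ (n - i * (k + 1))"
      unfolding T_def nat_int by (simp only: if_True)
  qed simp
  finally show ?thesis using L S_eq_G by simp
qed

end
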